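(* For $\varepsilon\in(0,1)$ let $u^\varepsilon\in C^2([0,\infty))$ be the solution on all of $[0,\infty)$ of the Dirichlet problem $2(u^\varepsilon)^3=\varepsilon(u^\varepsilon)''$ in $(0,\infty)$, $u^\varepsilon(0)=1$. Then $u^\varepsilon\to u\equiv0$ locally uniformly in $(0,\infty)$ as $\varepsilon\to0^+$, and \[ |u^\varepsilon(x)-u(x)|=\frac{\sqrt{\varepsilon}}{x+\sqrt{\varepsilon}}\ge\frac{1}{2x}\sqrt{\varepsilon}\qquad\text{for all }x\ge1. \] In particular, for any $d>1$, the optimal rate of convergence of $u^\varepsilon$ to $u$ in the $L^\infty((1,d))$-norm is $O(\sqrt{\varepsilon})$, i.e., there is $c>0$ with $c\sqrt{\varepsilon}\le\|u^\varepsilon-u\|_{L^\infty((1,d))}\le\sqrt{\varepsilon}$ for all $\varepsilon\in(0,1)$. *)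

theory Defs
  imports "HOL-Analysis.Analysis"
begin

definition dirichlet_solution :: "real \<Rightarrow> (real \<Rightarrow> real) \<Rightarrow> bool" where
  "dirichlet_solution \<epsilon> u \<longleftrightarrow>
     (\<exists>u' u''. (\<forall>x\<ge>0. (u has_real_derivative u' x) (at x within {0..}) \<and>
                       (u' has_real_derivative u'' x) (at x within {0..}))
             \<and> continuous_on {0..} u''
             \<and> (\<forall>x>0. 2 * (u x)^3 = \<epsilon> * u'' x))
     \<and> u 0 = 1"

end

theory Submission
  imports Defs
begin

lemma first_zero:
  fixes g :: "real \<Rightarrow> real"
  assumes "a \<le> b" "continuous_on {a..b} g" "g a > 0" "g b \<le> 0"
  shows "\<exists>t. a < t \<and> t \<le> b \<and> g t = 0 \<and> (\<forall>s. a \<le> s \<and> s < t \<longrightarrow> g s > 0)"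
proof -
  define Z where "Z = {s\<in>{a..b}. g s = 0}"
  have cl: "closed Z" unfolding Z_def
    using continuous_closed_preimage_constant[OF assms(2)] by simp
  obtain z where z: "a \<le> z" "z \<le> b" "g z = 0" using IVT2'[of g b 0 a] assms by auto
  hence ne: "Z \<noteq> {}" unfolding Z_def by auto
  have bb: "bdd_below Z" unfolding Z_def by (auto intro: bdd_belowI[of _ a])
  define t where "t = Inf Z"
  have tZ: "t \<in> Z" using closed_contains_Inf[OF ne bb cl] t_def by simp
  have tle: "\<And>s. s \<in> Z \<Longrightarrow> t \<le> s" unfolding t_def using bb by (simp add: cInf_lower)
  have "a < t" using tZ assms(3) unfolding Z_def by (cases "a = t") auto
  moreover have "\<forall>s. a \<le> s \<and> s < t \<longrightarrow> g s > 0"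
  proof (intro allI impI)
    fix s assume s: "a \<le> s \<and> s < t"
    show "g s > 0"
    proof (rule ccontr)
      assume "\<not> g s > 0"
      have "s \<le> b" using s tZ unfolding Z_def by auto
      have "continuous_on {a..s} g" using assms(2) \<open>s \<le> b\<close> by (auto intro: continuous_on_subset)
      then obtain y where "a \<le> y" "y \<le> s" "g y = 0" using IVT2'[of g s 0 a] s \<open>\<not> g s > 0\<close> assms by auto
      hence "y \<in> Z" unfolding Z_def using \<open>s \<le> b\<close> by auto
      with tle[OF this] s \<open>y \<le> s\<close> show False by linarith
    qed
  qed
  ultimately show ?thesis using tZ unfolding Z_def by auto
qed

locale odesol =
  fixes e :: real and u u' u'' :: "real \<Rightarrow> real"
  assumes e: "e > 0"
  and der: "\<forall>x\<ge>0. (u has_real_derivative u' x) (at x within {0..}) \<and> (u' has_real_derivative u'' x) (at x within {0..})"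
  and ode: "\<forall>x>0. 2*(u x)^3 = e * u'' x"
begin

lemma d1: assumes "x > 0" shows "(u has_real_derivative u' x) (at x)"
proof -
  have "(u has_real_derivative u' x) (at x within {0..})" using der assms by auto
  moreover have "at x within {0::real..} = at x" using assms by (intro at_within_interior) auto
  ultimately show ?thesis by simp
qed

lemma d2: assumes "x > 0" shows "(u' has_real_derivative u'' x) (at x)"
proof -
  have "(u' has_real_derivative u'' x) (at x within {0..})" using der assms by auto
  moreover have "at x within {0::real..} = at x" using assms by (intro at_within_interior) auto
  ultimately show ?thesis by simp
qed

lemma cu: "continuous_on {0..} u"
  unfolding continuous_on_eq_continuous_within
proof
  fix x :: real assume "x \<in> {0..}"
  hence "(u has_real_derivative u' x) (at x within {0..})" using der by simp
  thus "continuous (at x within {0..}) u" by (rule DERIV_continuous)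
qed

lemma cu': "continuous_on {0..} u'"
  unfolding continuous_on_eq_continuous_within
proof
  fix x :: real assume "x \<in> {0..}"
  hence "(u' has_real_derivative u'' x) (at x within {0..})" using der by simp
  thus "continuous (at x within {0..}) u'" by (rule DERIV_continuous)
qed

lemma cuI: "0 \<le> a \<Longrightarrow> continuous_on {a..b} u"
  using cu by (rule continuous_on_subset) auto

lemma cu'I: "0 \<le> a \<Longrightarrow> continuous_on {a..b} u'"
  using cu' by (rule continuous_on_subset) auto

lemma u'': "x > 0 \<Longrightarrow> u'' x = 2*(u x)^3/e"
  using ode e by (simp add: field_simps)

lemma energy: "x \<ge> 0 \<Longrightarrow> e*(u' x)^2 - (u x)^4 = e*(u' 0)^2 - (u 0)^4"
proof (cases "x = 0")
  case False
  assume "x \<ge> 0"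
  hence x: "x > 0" using False by simp
  show ?thesis
  proof (rule DERIV_isconst_end[OF x, where f = "\<lambda>x. e*(u' x)^2 - (u x)^4"])
    show "continuous_on {0..x} (\<lambda>x. e * (u' x)\<^sup>2 - (u x) ^ 4)"
      using cuI[of 0 x] cu'I[of 0 x] by (intro continuous_intros) auto
    fix y assume y: "0 < y" "y < x"
    have "((\<lambda>x. e*(u' x)^2 - (u x)^4) has_real_derivative (e*(2*u' y*u'' y) - 4*(u y)^3 * u' y)) (at y)"
      by (auto intro!: derivative_eq_intros d1[OF y(1)] d2[OF y(1)])
    moreover have "e*(2*u' y*u'' y) - 4*(u y)^3 * u' y = 0"
    proof -
      have h: "e*u'' y = 2*(u y)^3" using ode y by simp
      have "e*(2*u' y*u'' y) - 4*(u y)^3 * u' y = 2*u' y*(e*u'' y) - 4*(u y)^3 * u' y" by (simp add: algebra_simps)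
      also have "\<dots> = 0" unfolding h by simp
      finally show ?thesis .
    qed
    ultimately show "((\<lambda>x. e*(u' x)^2 - (u x)^4) has_real_derivative 0) (at y)" by simp
  qed
qed simp

lemma u_mono: assumes "0 \<le> a" "a \<le> b" "\<And>y. a < y \<Longrightarrow> y < b \<Longrightarrow> u' y \<ge> 0" shows "u a \<le> u b"
proof (rule DERIV_nonneg_imp_increasing_open[of a b u])
  fix y assume y: "a < y" "y < b"
  hence "y > 0" using assms by simp
  thus "\<exists>z. (u has_real_derivative z) (at y) \<and> 0 \<le> z" using d1[of y] assms(3)[OF y] by blast
qed (use assms cuI in auto)

lemma noblow:
  assumes x0: "x0 \<ge> 0" and pu: "u x0 > 0" and pu': "u' x0 > 0"
  shows False
proof -
  have L1: "\<forall>x\<ge>x0. u' x > 0"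
  proof (rule ccontr)
    assume "\<not> (\<forall>x\<ge>x0. u' x > 0)"
    then obtain x1 where x1: "x1 \<ge> x0" "u' x1 \<le> 0" by auto
    obtain t where t: "x0 < t" "t \<le> x1" "u' t = 0" "\<forall>s. x0 \<le> s \<and> s < t \<longrightarrow> u' s > 0"
      using first_zero[of x0 x1 u'] x1 pu' cu'I[OF x0] by auto
    have up: "u s > 0" if "x0 \<le> s" "s \<le> t" for s
    proof -
      have "u x0 \<le> u s"
      proof (rule u_mono)
        fix y assume "x0 < y" "y < s"
        thus "0 \<le> u' y" using t(4) that by (simp add: less_imp_le)
      qed (use that x0 in auto)
      thus ?thesis using pu by simp
    qed
    have "u' x0 \<le> u' t"
    proof (rule DERIV_nonneg_imp_increasing_open[of x0 t u'])
      fix y assume y: "x0 < y" "y < t"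
      have "u'' y = 2*(u y)^3/e" using u'' y x0 by simp
      moreover have "u y > 0" using up y by simp
      ultimately have "u'' y \<ge> 0" using e by simp
      moreover have "y > 0" using y x0 by simp
      ultimately show "\<exists>z. (u' has_real_derivative z) (at y) \<and> 0 \<le> z" using d2[of y] by auto
    qed (use t cu'I[OF x0] in auto)
    thus False using t pu' by simp
  qed
  have upos: "u x \<ge> u x0" if "x \<ge> x0" for x
  proof (rule u_mono)
    fix y assume "x0 < y" "y < x"
    thus "0 \<le> u' y" using L1 by (simp add: less_imp_le)
  qed (use that x0 in auto)
  define p where "p = u' x0"
  have L2: "u' x \<ge> p" if "x \<ge> x0" for x unfolding p_def
  proof (rule DERIV_nonneg_imp_increasing_open[of x0 x u'])
    fix y assume y: "x0 < y" "y < x"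
    have "u'' y = 2*(u y)^3/e" using u'' y x0 by simp
    moreover have "u y > 0" using upos[of y] y pu by simp
    ultimately have "u'' y \<ge> 0" using e by simp
    moreover have "y > 0" using y x0 by simp
      ultimately show "\<exists>z. (u' has_real_derivative z) (at y) \<and> 0 \<le> z" using d2[of y] by auto
  qed (use that cu'I[OF x0] in auto)
  have L3: "u x - p*x \<ge> u x0 - p*x0" if "x \<ge> x0" for x
  proof (rule DERIV_nonneg_imp_increasing_open[of x0 x "\<lambda>x. u x - p*x"])
    fix y assume y: "x0 < y" "y < x"
    have "((\<lambda>x. u x - p*x) has_real_derivative (u' y - p)) (at y)"
      using d1[of y] y x0 by (auto intro!: derivative_eq_intros)
    thus "\<exists>z. ((\<lambda>x. u x - p*x) has_real_derivative z) (at y) \<and> 0 \<le> z" using L2[of y] y by auto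
  qed (use that cuI[OF x0] in \<open>auto intro!: continuous_intros\<close>)
  define k where "k = e*(u' 0)^2 - (u 0)^4"
  have en: "e*(u' x)^2 - (u x)^4 = k" if "x \<ge> 0" for x using energy[OF that] k_def by simp
  define M where "M = max 1 (2*\<bar>k\<bar>)"
  have pp: "p > 0" using pu' p_def by simp
  define x2 where "x2 = x0 + M/p"
  have x2: "x2 \<ge> x0" using pp M_def x2_def by simp
  have "u x2 \<ge> u x0 + M" using L3[OF x2] pp unfolding x2_def by (simp add: algebra_simps)
  hence ux2: "u x2 \<ge> M" using pu by simp
  define c where "c = 1/sqrt(2*e)"
  have cpos: "c > 0" using e c_def by simp
  have c2: "c^2 = 1/(2*e)" using e unfolding c_def by (simp add: power_divide)
  have grow: "u' x \<ge> c*(u x)^2" and ubig: "u x \<ge> M" if "x \<ge> x2" for x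
  proof -
    have "u x \<ge> u x2"
    proof (rule u_mono)
      fix y assume "x2 < y" "y < x"
      hence "y \<ge> x0" using x2 by simp
      thus "0 \<le> u' y" using L1 by (simp add: less_imp_le)
    qed (use that x0 x2 in auto)
    thus "u x \<ge> M" using ux2 by simp
    hence u1: "u x \<ge> 1" and uk: "u x \<ge> 2*\<bar>k\<bar>" unfolding M_def by auto
    have "(u x)^4 \<ge> u x"
    proof -
      have "(u x)^3 \<ge> 1" using u1 by (simp add: one_le_power)
      hence "u x * (u x)^3 \<ge> u x * 1" using u1 by (intro mult_left_mono) auto
      thus ?thesis by (simp add: power_numeral_reduce)
    qed
    hence "e*(u' x)^2 \<ge> (u x)^4/2" using en[of x] that x2 x0 uk by linarith
    hence "(u' x)^2 \<ge> (u x)^4/(2*e)" using e by (simp add: field_simps)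
    also have "(u x)^4/(2*e) = (c*(u x)^2)^2" using c2 by (simp add: power_mult_distrib power_mult[symmetric])
    finally have "(c*(u x)^2)^2 \<le> (u' x)^2" .
    moreover have "x \<ge> x0" using that x2 by linarith
    hence "u' x \<ge> 0" using L1 by (simp add: less_imp_le)
    ultimately show "u' x \<ge> c*(u x)^2" by (rule power2_le_imp_le)
  qed
  define w where "w = (\<lambda>x. 1/u x + c*x)"
  define x3 where "x3 = x2 + 1/(c * u x2) + 1"
  have ux2p: "u x2 > 0" using ux2 M_def by simp
  have x3: "x3 > x2" using ux2p cpos x3_def by (simp add: add_pos_pos)
  have "w x3 \<le> w x2"
  proof (rule DERIV_nonpos_imp_decreasing_open[of x2 x3 w])
    fix y assume y: "x2 < y" "y < x3"
    have uy: "u y > 0" using ubig[of y] y M_def by simp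
    have y0: "y > 0" using y x2 x0 by simp
    have "(w has_real_derivative (- (u' y * inverse (u y) * inverse (u y)) + c * 1)) (at y)"
      unfolding w_def divide_inverse mult_1_left
      by (intro derivative_eq_intros d1[OF y0] refl) (use uy d1[OF y0] in auto)
    also have "- (u' y * inverse (u y) * inverse (u y)) + c * 1 = - u' y / (u y)^2 + c"
      by (simp add: power2_eq_square divide_inverse)
    finally have "(w has_real_derivative (- u' y / (u y)^2 + c)) (at y)" .
    moreover have "- u' y / (u y)^2 + c \<le> 0"
      using grow[of y] y uy by (simp add: field_simps)
    ultimately show "\<exists>z. (w has_real_derivative z) (at y) \<and> z \<le> 0" by auto
  next
    show "continuous_on {x2..x3} w"
    proof -
      have cu2: "continuous_on {x2..x3} u" using x2 x0 by (intro cuI) simp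
      have nz: "\<forall>y\<in>{x2..x3}. u y \<noteq> 0"
      proof
        fix y assume "y \<in> {x2..x3}"
        hence "u y \<ge> M" using ubig by simp
        thus "u y \<noteq> 0" using M_def by simp
      qed
      show ?thesis unfolding w_def by (intro continuous_intros cu2) (use nz in auto)
    qed
  qed (use x3 in simp)
  hence "1/u x3 \<le> 1/u x2 - c*(x3 - x2)" unfolding w_def by (simp add: algebra_simps)
  also have "\<dots> = -c" unfolding x3_def using cpos ux2p by (simp add: field_simps)
  finally have "1/u x3 \<le> -c" .
  moreover have "u x3 > 0" using ubig[of x3] x3 M_def by simp
  hence "1/u x3 > 0" by simp
  ultimately show False using cpos by linarith
qed


lemma neg: "odesol e (\<lambda>x. - u x) (\<lambda>x. - u' x) (\<lambda>x. - u'' x)"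
proof (unfold_locales)
  show "e > 0" using e .
  show "\<forall>x\<ge>0. ((\<lambda>x. - u x) has_real_derivative - u' x) (at x within {0..}) \<and>
     ((\<lambda>x. - u' x) has_real_derivative - u'' x) (at x within {0..})"
    using der by (auto intro: DERIV_minus)
  show "\<forall>x>0. 2 * (- u x) ^ 3 = e * - u'' x"
  proof (intro allI impI)
    fix x :: real assume "x > 0"
    hence "2*(u x)^3 = e * u'' x" using ode by simp
    thus "2 * (- u x) ^ 3 = e * - u'' x" by (simp add: power_minus_odd)
  qed
qed

lemma nopos: "x \<ge> 0 \<Longrightarrow> u x > 0 \<Longrightarrow> u' x \<le> 0"
  using noblow[of x] by force

lemma noneg: "x \<ge> 0 \<Longrightarrow> u x < 0 \<Longrightarrow> u' x \<ge> 0"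
  using odesol.noblow[OF neg, of x] by force

lemma explicit:
  assumes u0: "u 0 = 1" and x: "x \<ge> 0"
  shows "u x = sqrt e / (sqrt e + x)"
proof -
  define k where "k = e*(u' 0)^2 - 1"
  have en: "e*(u' x)^2 - (u x)^4 = k" if "x \<ge> 0" for x using energy[OF that] k_def u0 by simp
  define a where "a = sqrt e"
  have a: "a > 0" "a^2 = e" using e a_def by auto
  have k0: "k = 0"
  proof (rule ccontr)
    assume "k \<noteq> 0"
    hence "k > 0 \<or> k < 0" by linarith
    thus False
    proof
      assume kp: "k > 0"
      have nz: "u' y \<noteq> 0" if "y \<ge> 0" for y
      proof
        assume "u' y = 0"
        hence "(u y)^4 = -k" using en[OF that] by simp
        moreover have "(u y)^4 \<ge> 0" by simp
        ultimately show False using kp by linarith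
      qed
      have "u' 0 \<le> 0" using nopos[of 0] u0 by simp
      hence u'0: "u' 0 < 0" using nz[of 0] by linarith
      have neg': "u' y < 0" if yy: "y \<ge> 0" for y
      proof (rule ccontr)
        assume "\<not> u' y < 0"
        hence "u' 0 \<le> 0" "0 \<le> u' y" using u'0 by auto
        then obtain z where "0 \<le> z" "z \<le> y" "u' z = 0"
          using IVT'[of u' 0 0 y] yy cu'I[of 0 y] by auto
        thus False using nz by simp
      qed
      define c where "c = sqrt (k/e)"
      have cp: "c > 0" using kp e c_def by simp
      have bd: "u' y \<le> -c" if "y \<ge> 0" for y
      proof -
        have "e*(u' y)^2 = k + (u y)^4" using en[OF that] by simp
        hence "(u' y)^2 \<ge> k/e" using e by (simp add: field_simps)
        hence "c \<le> sqrt ((u' y)^2)" unfolding c_def by (rule real_sqrt_le_mono)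
        thus ?thesis using neg'[OF that] by simp
      qed
      define y where "y = 2/c"
      have y0: "y \<ge> 0" using cp y_def by simp
      have "u y + c*y \<le> u 0 + c*0"
      proof (rule DERIV_nonpos_imp_decreasing_open[of 0 y "\<lambda>x. u x + c*x"])
        fix z assume z: "0 < z" "z < y"
        have "((\<lambda>x. u x + c*x) has_real_derivative (u' z + c)) (at z)"
          using d1[OF z(1)] by (auto intro!: derivative_eq_intros)
        moreover have "u' z + c \<le> 0" using bd[of z] z by simp
        ultimately show "\<exists>d. ((\<lambda>x. u x + c*x) has_real_derivative d) (at z) \<and> d \<le> 0" by blast
      next
        show "continuous_on {0..y} (\<lambda>x. u x + c*x)"
          using cuI[of 0 y] by (intro continuous_intros) auto
      qed (use y0 in simp)
      hence "u y \<le> -1" using u0 cp y_def by simp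
      hence "u' y \<ge> 0" using noneg[OF y0] by simp
      thus False using neg'[OF y0] by simp
    next
      assume kn: "k < 0"
      have nz: "u y \<noteq> 0" if "y \<ge> 0" for y
      proof
        assume "u y = 0"
        hence "e*(u' y)^2 = k" using en[OF that] by simp
        moreover have "e*(u' y)^2 \<ge> 0" using e by simp
        ultimately show False using kn by linarith
      qed
      have pos: "u y > 0" if yy: "y \<ge> 0" for y
      proof (rule ccontr)
        assume "\<not> u y > 0"
        then obtain z where "0 \<le> z" "z \<le> y" "u z = 0"
          using IVT2'[of u y 0 0] yy cuI[of 0 y] u0 by auto
        thus False using nz by simp
      qed
      have dn: "u' y \<le> 0" if "y \<ge> 0" for y using nopos[OF that pos[OF that]] .
      have le1: "u y \<le> 1" if "y \<ge> 0" for y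
      proof -
        have "u y \<le> u 0"
        proof (rule DERIV_nonpos_imp_decreasing_open[of 0 y u])
          fix z assume z: "0 < z" "z < y"
          show "\<exists>d. (u has_real_derivative d) (at z) \<and> d \<le> 0" using d1[OF z(1)] dn[of z] z by auto
        qed (use that cuI[of 0 y] in auto)
        thus ?thesis using u0 by simp
      qed
      define m where "m = 2*(-k)/e"
      have mp: "m > 0" unfolding m_def using kn e by (intro divide_pos_pos) auto
      have u''b: "u'' z \<ge> m" if "z > 0" for z
      proof -
        have "(u z)^4 \<ge> -k" using en[of z] that e by (smt (verit) mult_nonneg_nonneg zero_le_power2)
        moreover have "(u z)^4 \<le> (u z)^3"
        proof -
          have "u z * (u z)^3 \<le> 1 * (u z)^3" using le1[of z] pos[of z] that
            by (intro mult_right_mono) auto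
          thus ?thesis by (simp add: power_numeral_reduce)
        qed
        ultimately have "(u z)^3 \<ge> -k" by linarith
        hence "2*(u z)^3/e \<ge> 2*(-k)/e" using e by (intro divide_right_mono) auto
        thus ?thesis using u''[OF that] m_def by simp
      qed
      define y where "y = (1 - u' 0)/m"
      have y0: "y > 0" using mp dn[of 0] y_def by simp
      have "u' 0 - m*0 \<le> u' y - m*y"
      proof (rule DERIV_nonneg_imp_increasing_open[of 0 y "\<lambda>x. u' x - m*x"])
        fix z assume z: "0 < z" "z < y"
        have "((\<lambda>x. u' x - m*x) has_real_derivative (u'' z - m)) (at z)"
          using d2[OF z(1)] by (auto intro!: derivative_eq_intros)
        moreover have "u'' z - m \<ge> 0" using u''b[OF z(1)] by simp
        ultimately show "\<exists>d. ((\<lambda>x. u' x - m*x) has_real_derivative d) (at z) \<and> d \<ge> 0" by blast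
      next
        show "continuous_on {0..y} (\<lambda>x. u' x - m*x)"
          using cu'I[of 0 y] by (intro continuous_intros) auto
      qed (use y0 in simp)
      moreover have "m*y = 1 - u' 0" using mp unfolding y_def by simp
      ultimately have "u' y \<ge> 1" by linarith
      thus False using dn[of y] y0 by simp
    qed
  qed
  have formula: "u s = a/(a+s)" if s0: "s \<ge> 0" and allpos: "\<forall>y. 0 \<le> y \<and> y \<le> s \<longrightarrow> u y > 0" for s
  proof -
    have u'f: "u' y = - ((u y)^2/a)" if "0 \<le> y" "y \<le> s" for y
    proof -
      have uy: "u y > 0" using allpos that by simp
      have "e*(u' y)^2 = (u y)^4" using en[of y] that k0 by simp
      hence h1: "(u' y)^2 = (u y)^4/e" using e by (simp add: eq_divide_eq mult.commute)
      have h2: "((u y)^2/a)^2 = (u y)^4/e" using a by (simp add: power_divide power_mult[symmetric])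
      have "(u' y)^2 = ((u y)^2/a)^2" using h1 h2 by simp
      hence "u' y = (u y)^2/a \<or> u' y = -((u y)^2/a)" by (simp add: power2_eq_iff)
      moreover have "u' y \<le> 0" using nopos[of y] uy that by simp
      moreover have "(u y)^2/a > 0" using uy a by simp
      ultimately show ?thesis by auto
    qed
    show ?thesis
    proof (cases "s = 0")
      case True thus ?thesis using u0 a by simp
    next
      case False
      hence sp: "s > 0" using s0 by simp
      have "(\<lambda>x. 1/u x - x/a) s = (\<lambda>x. 1/u x - x/a) 0"
      proof (rule DERIV_isconst_end[OF sp])
        have cs: "continuous_on {0..s} u" using cuI[of 0 s] by simp
        have nz: "\<forall>y\<in>{0..s}. u y \<noteq> 0" using allpos by (auto simp: less_imp_neq[symmetric])
        show "continuous_on {0..s} (\<lambda>x. 1/u x - x/a)"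
          by (intro continuous_intros cs) (use nz a in auto)
        fix y assume y: "0 < y" "y < s"
        have uy: "u y > 0" using allpos y by simp
        have "((\<lambda>x. 1/u x - x/a) has_real_derivative (- (u' y * inverse (u y) * inverse (u y)) - 1/a)) (at y)"
          unfolding divide_inverse mult_1_left
          by (intro derivative_eq_intros d1[OF y(1)] refl) (use uy d1[OF y(1)] in auto)
        moreover have "- (u' y * inverse (u y) * inverse (u y)) - 1/a = 0"
          using u'f[of y] y uy a by (simp add: field_simps power2_eq_square)
        ultimately show "((\<lambda>x. 1/u x - x/a) has_real_derivative 0) (at y)" by simp
      qed
      hence h: "1/u s = 1 + s/a" using u0 by simp
      have "1 + s/a = (a+s)/a" using a by (simp add: field_simps)
      hence "1/u s = (a+s)/a" using h by simp
      hence "inverse (u s) = inverse (a/(a+s))" by (simp add: divide_inverse)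
      thus ?thesis by (rule inverse_eq_imp_eq)
    qed
  qed
  have allpos: "u y > 0" if yy: "y \<ge> 0" for y
  proof (rule ccontr)
    assume "\<not> u y > 0"
    then obtain t where t: "0 < t" "t \<le> y" "u t = 0" "\<forall>s. 0 \<le> s \<and> s < t \<longrightarrow> u s > 0"
      using first_zero[of 0 y u] yy cuI[of 0 y] u0 by auto
    have eqs: "u s = a/(a+s)" if "0 \<le> s" "s < t" for s
      by (rule formula) (use that t(4) in auto)
    have l1: "(u \<longlongrightarrow> u t) (at_left t)"
      using DERIV_isCont[OF d1[OF t(1)]] by (simp add: isCont_def filterlim_at_split)
    have l2: "((\<lambda>s. a/(a+s)) \<longlongrightarrow> a/(a+t)) (at_left t)"
      using a t by (intro tendsto_intros) auto
    have ev: "eventually (\<lambda>s. a/(a+s) = u s) (at_left t)"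
      using eventually_at_left_real[OF t(1)] by eventually_elim (use eqs in auto)
    have l3: "(u \<longlongrightarrow> a/(a+t)) (at_left t)" using tendsto_cong[OF ev] l2 by simp
    have "u t = a/(a+t)" using tendsto_unique[OF _ l1 l3] by simp
    thus False using t a by simp
  qed
  show ?thesis using formula[OF x] allpos a_def by simp
qed

end

lemma sol_explicit:
  assumes "dirichlet_solution e v" "e > 0" "x \<ge> 0"
  shows "v x = sqrt e / (sqrt e + x)"
proof -
  obtain u' u'' where h: "\<forall>x\<ge>0. (v has_real_derivative u' x) (at x within {0..}) \<and>
                       (u' has_real_derivative u'' x) (at x within {0..})"
     "\<forall>x>0. 2 * (v x)^3 = e * u'' x" and v0: "v 0 = 1"
    using assms(1) unfolding dirichlet_solution_def by blast
  interpret odesol e v u' u'' using h assms(2) by unfold_locales auto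
  show ?thesis using explicit[OF v0 assms(3)] .
qed

theorem lemma4p6:
  fixes U :: "real \<Rightarrow> real \<Rightarrow> real"
  assumes sol: "\<forall>\<epsilon>\<in>{0<..<1}. dirichlet_solution \<epsilon> (U \<epsilon>)"
  shows "(\<forall>K. compact K \<and> K \<subseteq> {0<..} \<longrightarrow> uniform_limit K U (\<lambda>x. 0) (at_right 0))
    \<and> (\<forall>\<epsilon>\<in>{0<..<1}. \<forall>x\<ge>1.
          \<bar>U \<epsilon> x - 0\<bar> = sqrt \<epsilon> / (x + sqrt \<epsilon>) \<and> sqrt \<epsilon> / (x + sqrt \<epsilon>) \<ge> sqrt \<epsilon> / (2 * x))
    \<and> (\<forall>d>1. \<exists>c>0. \<forall>\<epsilon>\<in>{0<..<1}.
          c * sqrt \<epsilon> \<le> (SUP x\<in>{1<..<d}. \<bar>U \<epsilon> x - 0\<bar>) \<and>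
          (SUP x\<in>{1<..<d}. \<bar>U \<epsilon> x - 0\<bar>) \<le> sqrt \<epsilon>)"
proof -
  have expl: "U \<epsilon> x = sqrt \<epsilon> / (x + sqrt \<epsilon>)" if "\<epsilon> \<in> {0<..<1}" "x \<ge> 0" for \<epsilon> x
    using sol_explicit[of \<epsilon> "U \<epsilon>" x] sol that by (simp add: add.commute)
  have absU: "\<bar>U \<epsilon> x - 0\<bar> = sqrt \<epsilon> / (x + sqrt \<epsilon>)" if "\<epsilon> \<in> {0<..<1}" "x \<ge> 0" for \<epsilon> x
    using expl[OF that] that by simp
  have P1: "uniform_limit K U (\<lambda>x. 0) (at_right 0)" if K: "compact K" "K \<subseteq> {0<..}" for K
  proof (cases "K = {}")
    case True thus ?thesis by (simp add: uniform_limit_iff)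
  next
    case False
    obtain m where m: "m \<in> K" "\<forall>x\<in>K. m \<le> x" using compact_attains_inf[OF K(1) False] by blast
    have mp: "m > 0" using m K by auto
    show ?thesis unfolding uniform_limit_iff
    proof (intro allI impI)
      fix r :: real assume r: "r > 0"
      define b where "b = min 1 ((r*m)^2)"
      have bp: "b > 0" using r mp b_def by simp
      show "\<forall>\<^sub>F n in at_right 0. \<forall>x\<in>K. dist (U n x) 0 < r"
        using eventually_at_right_real[OF bp]
      proof eventually_elim
        case (elim \<epsilon>)
        hence ep: "\<epsilon> \<in> {0<..<1}" using b_def by auto
        have "sqrt \<epsilon> < sqrt ((r*m)^2)" using elim b_def by (intro real_sqrt_less_mono) auto
        hence sl: "sqrt \<epsilon> < r*m" using r mp by simp
        show ?case
        proof
          fix x assume x: "x \<in> K"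
          hence xm: "x \<ge> m" using m by simp
          have dd: "dist (U \<epsilon> x) 0 = sqrt \<epsilon> / (x + sqrt \<epsilon>)" using absU[OF ep, of x] xm mp by (simp add: dist_real_def)
          have "sqrt \<epsilon> \<ge> 0" using ep by simp
          hence "m \<le> x + sqrt \<epsilon>" using xm by linarith
          hence "sqrt \<epsilon> / (x + sqrt \<epsilon>) \<le> sqrt \<epsilon> / m" using mp ep by (intro frac_le) auto
          also have "\<dots> < r" using sl mp by (simp add: divide_less_eq mult.commute)
          finally have "sqrt \<epsilon> / (x + sqrt \<epsilon>) < r" .
          thus "dist (U \<epsilon> x) 0 < r" using \<open>dist (U \<epsilon> x) 0 = sqrt \<epsilon> / (x + sqrt \<epsilon>)\<close> by simp
        qed
      qed
    qed
  qed
  have P2: "\<bar>U \<epsilon> x - 0\<bar> = sqrt \<epsilon> / (x + sqrt \<epsilon>) \<and> sqrt \<epsilon> / (x + sqrt \<epsilon>) \<ge> sqrt \<epsilon> / (2 * x)"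
    if e: "\<epsilon> \<in> {0<..<1}" and x: "x \<ge> 1" for \<epsilon> x
  proof
    show "\<bar>U \<epsilon> x - 0\<bar> = sqrt \<epsilon> / (x + sqrt \<epsilon>)" using absU[OF e] x by simp
    have s1: "sqrt \<epsilon> < 1" "sqrt \<epsilon> > 0" using e by auto
    hence p1: "0 < x + sqrt \<epsilon>" and p2: "x + sqrt \<epsilon> \<le> 2 * x" using x by linarith+
    show "sqrt \<epsilon> / (x + sqrt \<epsilon>) \<ge> sqrt \<epsilon> / (2 * x)"
      by (rule frac_le[OF less_imp_le[OF s1(2)] order_refl p1 p2])
  qed
  have P3: "\<exists>c>0. \<forall>\<epsilon>\<in>{0<..<1}.
          c * sqrt \<epsilon> \<le> (SUP x\<in>{1<..<d}. \<bar>U \<epsilon> x - 0\<bar>) \<and>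
          (SUP x\<in>{1<..<d}. \<bar>U \<epsilon> x - 0\<bar>) \<le> sqrt \<epsilon>" if d: "d > 1" for d
  proof (intro exI conjI ballI)
    show "(1/3::real) > 0" by simp
    fix \<epsilon> :: real assume e: "\<epsilon> \<in> {0<..<1}"
    have sq: "sqrt \<epsilon> > 0" "sqrt \<epsilon> < 1" using e by auto
    have bnd: "\<bar>U \<epsilon> x - 0\<bar> \<le> sqrt \<epsilon>" if "x \<in> {1<..<d}" for x
    proof -
      have "\<bar>U \<epsilon> x - 0\<bar> = sqrt \<epsilon> / (x + sqrt \<epsilon>)" using absU[OF e] that by simp
      also have "\<dots> \<le> sqrt \<epsilon> / 1"
      proof (rule frac_le[OF less_imp_le[OF sq(1)] order_refl])
        show "(0::real) < 1" by simp
        have "1 < x" using that by simp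
        thus "1 \<le> x + sqrt \<epsilon>" using sq(1) by linarith
      qed
      finally show ?thesis by simp
    qed
    show "(SUP x\<in>{1<..<d}. \<bar>U \<epsilon> x - 0\<bar>) \<le> sqrt \<epsilon>"
      using d bnd by (intro cSUP_least) auto
    define x0 where "x0 = min ((1+d)/2) 2"
    have x0: "x0 \<in> {1<..<d}" "x0 \<le> 2" using d unfolding x0_def by (auto simp: min_def)
    have "1/3 * sqrt \<epsilon> = sqrt \<epsilon> / 3" by simp
    also have "\<dots> \<le> sqrt \<epsilon> / (x0 + sqrt \<epsilon>)"
    proof (rule frac_le[OF less_imp_le[OF sq(1)] order_refl])
      have "1 < x0" using x0(1) by simp
      thus "0 < x0 + sqrt \<epsilon>" using sq(1) by linarith
      show "x0 + sqrt \<epsilon> \<le> 3" using x0(2) sq(2) by linarith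
    qed
    also have "\<dots> = \<bar>U \<epsilon> x0 - 0\<bar>" using absU[OF e, of x0] x0 by simp
    finally have "1/3 * sqrt \<epsilon> \<le> \<bar>U \<epsilon> x0 - 0\<bar>" .
    moreover have "bdd_above ((\<lambda>x. \<bar>U \<epsilon> x - 0\<bar>) ` {1<..<d})"
      using bnd by (intro bdd_aboveI2) auto
    ultimately show "1/3 * sqrt \<epsilon> \<le> (SUP x\<in>{1<..<d}. \<bar>U \<epsilon> x - 0\<bar>)"
      using x0(1) by (intro cSUP_upper2) auto
  qed
  show ?thesis using P1 P2 P3 by blast
qed

end
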